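(* Let $n\ge 1$, $c\ge 2$, $d\ge 2$ be integers, and let $f:\mathbb{Z}_c^n\to\mathbb{Z}_d$ be a function that is not an $n$-partite linear function. Let $\pi$ be a probability distribution on $\mathbb{Z}_c^n$ with $\pi(\mathbf{s})>0$ for every $\mathbf{s}$, and put $$\bar p^{\mathcal{L}}_{f}=\max_{g}\sum_{\mathbf{s}}\pi(\mathbf{s})\,\delta^{f(\mathbf{s})}_{g(\mathbf{s})},$$ the maximum being over all $n$-partite linear functions $g:\mathbb{Z}_c^n\to\mathbb{Z}_d$. Consider the inequality $$\sum_{\mathbf{s}}\pi(\mathbf{s})\sum_{k=1}^{d-1}\Big(\delta^{k}_{f(\mathbf{s})}-\delta^{0}_{f(\mathbf{s})}\Big)p(k|\mathbf{s})\;\le\;\bar p^{\mathcal{L}}_{f}-\sum_{\mathbf{s}}\pi(\mathbf{s})\,\delta^{0}_{f(\mathbf{s})}. \qquad (\ast)$$ Then $(\ast)$ is a non-trivial Bell inequality: it is satisfied by every LHV correlator, and its right-hand side is strictly smaller than the maximum of its left-hand side over all correlators in $\mathcal{P}$.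
   Context: Bell scenario $(n,c,d)$: $n$ space-like separated parties; party $j$ receives an input $s_j\in\mathbb{Z}_c$ and produces an output $m_j\in\mathbb{Z}_d$; $\mathbf{s}=(s_1,\dots,s_n)$, $\mathbf{m}=(m_1,\dots,m_n)$. A conditional distribution $p(\mathbf{m}|\mathbf{s})$ is LHV (local hidden variable) if $p(\mathbf{m}|\mathbf{s})=\int p(\lambda)d\lambda\prod_{j=1}^n p(m_j|s_j,\lambda)$ for some probability measure on a hidden variable space and local conditional distributions. Its correlator is $p(k|\mathbf{s})=\sum_{\mathbf{m}}\delta^{[\sum_j m_j]_d}_{k}\,p(\mathbf{m}|\mathbf{s})$ for $k\in\mathbb{Z}_d$, where $[\cdot]_d$ denotes reduction mod $d$; LHV correlators are correlators of LHV distributions. $\mathcal{P}$ is the set of all correlator families, i.e. the convex hull of the deterministic correlators $p(k|\mathbf{s})=\delta^k_{F(\mathbf{s})}$ over all functions $F:\mathbb{Z}_c^n\to\mathbb{Z}_d$ (equivalently, all families with $p(\cdot|\mathbf{s})$ a probability distribution on $\mathbb{Z}_d$ for each $\mathbf{s}$). A function $g:\mathbb{Z}_c^n\to\mathbb{Z}_d$ is $n$-partite linear if $g(\mathbf{s})=[\sum_{j=1}^n g_j(s_j)]_d$ for some single-site maps $g_j:\mathbb{Z}_c\to\mathbb{Z}_d$. $\delta$ denotes the Kronecker delta. *)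

theory Defs
  imports "HOL-Probability.Probability"
begin

text \<open>Tuples in Z_q^n are represented as lists of naturals of length n with entries below q.\<close>
definition tuples :: "nat \<Rightarrow> nat \<Rightarrow> nat list set" where
  "tuples n q = {xs. length xs = n \<and> (\<forall>x\<in>set xs. x < q)}"

text \<open>Local hidden variable model: probability measure M on the hidden variable space and
  local response functions P j a b lam = p(m_j = b | s_j = a, lam) for party j.\<close>
definition lhv_model :: "'h measure \<Rightarrow> (nat \<Rightarrow> nat \<Rightarrow> nat \<Rightarrow> 'h \<Rightarrow> real) \<Rightarrow> nat \<Rightarrow> nat \<Rightarrow> nat \<Rightarrow> bool" where
  "lhv_model M P n c d \<longleftrightarrow> prob_space M \<and>
     (\<forall>j a b. P j a b \<in> borel_measurable M) \<and>
     (\<forall>j<n. \<forall>a<c. \<forall>b<d. \<forall>lam\<in>space M. 0 \<le> P j a b lam) \<and>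
     (\<forall>j<n. \<forall>a<c. \<forall>lam\<in>space M. (\<Sum>b<d. P j a b lam) = 1)"

definition lhv_dist :: "'h measure \<Rightarrow> (nat \<Rightarrow> nat \<Rightarrow> nat \<Rightarrow> 'h \<Rightarrow> real) \<Rightarrow> nat \<Rightarrow> nat list \<Rightarrow> nat list \<Rightarrow> real" where
  "lhv_dist M P n s m = (\<integral>lam. (\<Prod>j<n. P j (s ! j) (m ! j) lam) \<partial>M)"

definition correlator :: "nat \<Rightarrow> nat \<Rightarrow> (nat list \<Rightarrow> nat list \<Rightarrow> real) \<Rightarrow> nat list \<Rightarrow> nat \<Rightarrow> real" where
  "correlator n d p s k = (\<Sum>m\<in>tuples n d. (if sum_list m mod d = k then 1 else 0) * p s m)"

definition corr_families :: "nat \<Rightarrow> nat \<Rightarrow> nat \<Rightarrow> (nat list \<Rightarrow> nat \<Rightarrow> real) set" where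
  "corr_families n c d = {q. (\<forall>s\<in>tuples n c. (\<forall>k<d. 0 \<le> q s k) \<and> (\<Sum>k<d. q s k) = 1)}"

definition npartite_linear :: "nat \<Rightarrow> nat \<Rightarrow> nat \<Rightarrow> (nat list \<Rightarrow> nat) \<Rightarrow> bool" where
  "npartite_linear n c d g \<longleftrightarrow>
     (\<exists>gs :: nat \<Rightarrow> nat \<Rightarrow> nat. (\<forall>j<n. \<forall>a<c. gs j a < d) \<and>
        (\<forall>s\<in>tuples n c. g s = (\<Sum>j<n. gs j (s ! j)) mod d))"

definition kdelta :: "nat \<Rightarrow> nat \<Rightarrow> real" where
  "kdelta a b = (if a = b then 1 else 0)"

definition bell_lhs :: "nat \<Rightarrow> nat \<Rightarrow> nat \<Rightarrow> (nat list \<Rightarrow> real) \<Rightarrow> (nat list \<Rightarrow> nat) \<Rightarrow> (nat list \<Rightarrow> nat \<Rightarrow> real) \<Rightarrow> real" where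
  "bell_lhs n c d \<pi> f q = (\<Sum>s\<in>tuples n c. \<pi> s * (\<Sum>k\<in>{1..d-1}. (kdelta k (f s) - kdelta 0 (f s)) * q s k))"

definition pbar_lin :: "nat \<Rightarrow> nat \<Rightarrow> nat \<Rightarrow> (nat list \<Rightarrow> real) \<Rightarrow> (nat list \<Rightarrow> nat) \<Rightarrow> real" where
  "pbar_lin n c d \<pi> f = Max {(\<Sum>s\<in>tuples n c. \<pi> s * kdelta (f s) (g s)) | g. npartite_linear n c d g}"

definition bell_rhs :: "nat \<Rightarrow> nat \<Rightarrow> nat \<Rightarrow> (nat list \<Rightarrow> real) \<Rightarrow> (nat list \<Rightarrow> nat) \<Rightarrow> real" where
  "bell_rhs n c d \<pi> f = pbar_lin n c d \<pi> f - (\<Sum>s\<in>tuples n c. \<pi> s * kdelta 0 (f s))"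

end

theory Submission
  imports Defs
begin

lemma tuples_0: "tuples 0 c = {[]}" by (auto simp: tuples_def)

lemma tuples_Suc: "tuples (Suc n) c = (\<lambda>(a,s). a#s) ` ({..<c} \<times> tuples n c)"
proof
  show "tuples (Suc n) c \<subseteq> (\<lambda>(a,s). a#s) ` ({..<c} \<times> tuples n c)"
  proof
    fix xs assume "xs \<in> tuples (Suc n) c"
    then obtain a s where "xs = a#s" "length s = n" "a < c" "\<forall>x\<in>set s. x < c"
      by (auto simp: tuples_def length_Suc_conv)
    then show "xs \<in> (\<lambda>(a,s). a#s) ` ({..<c} \<times> tuples n c)"
      by (force simp: tuples_def)
  qed
qed (auto simp: tuples_def)

lemma finite_tuples: "finite (tuples n c)"
  by (induction n) (auto simp: tuples_0 tuples_Suc)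

lemma sum_tuples_Suc: "(\<Sum>s\<in>tuples (Suc n) c. g s) = (\<Sum>a<c. \<Sum>s\<in>tuples n c. g (a#s))"
proof -
  have "(\<Sum>s\<in>tuples (Suc n) c. g s) = (\<Sum>x\<in>{..<c} \<times> tuples n c. g ((\<lambda>(a,s). a#s) x))"
    unfolding tuples_Suc by (subst sum.reindex) (auto simp: inj_on_def split_def)
  also have "\<dots> = (\<Sum>a<c. \<Sum>s\<in>tuples n c. g (a#s))"
    by (simp add: sum.cartesian_product split_def)
  finally show ?thesis .
qed

lemma sum_prod_tuples:
  "(\<Sum>m\<in>tuples n d. \<Prod>j<n. x j (m!j)) = (\<Prod>j<n. \<Sum>b<d. (x j b :: real))"
proof (induction n arbitrary: x)
  case 0 then show ?case by (simp add: tuples_0)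
next
  case (Suc n)
  have "(\<Sum>m\<in>tuples (Suc n) d. \<Prod>j<Suc n. x j (m!j))
      = (\<Sum>b<d. x 0 b * (\<Sum>m\<in>tuples n d. \<Prod>j<n. x (Suc j) (m!j)))"
    by (simp del: prod.lessThan_Suc add: sum_tuples_Suc prod.lessThan_Suc_shift sum_distrib_left)
  also have "\<dots> = (\<Sum>b<d. x 0 b) * (\<Prod>j<n. \<Sum>b<d. x (Suc j) b)"
    using Suc[of "\<lambda>j. x (Suc j)"] by (simp add: sum_distrib_right)
  also have "\<dots> = (\<Prod>j<Suc n. \<Sum>b<d. x j b)"
    by (simp del: prod.lessThan_Suc add: prod.lessThan_Suc_shift)
  finally show ?case .
qed

lemma ex_max: "finite A \<Longrightarrow> A \<noteq> {} \<Longrightarrow> \<exists>x\<in>A. \<forall>y\<in>A. (g y :: real) \<le> g x"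
proof -
  assume A: "finite A" "A \<noteq> {}"
  then have "Max (g ` A) \<in> g ` A" by (intro Max_in) auto
  then obtain x where "x \<in> A" "g x = Max (g ` A)" by auto
  with A show ?thesis by (metis Max_ge finite_imageI image_eqI)
qed


definition resp :: "(nat \<Rightarrow> nat \<Rightarrow> nat) \<Rightarrow> nat \<Rightarrow> nat list \<Rightarrow> nat list" where
  "resp h n s = map (\<lambda>j. h j (s!j)) [0..<n]"

lemma resp_Suc: "resp h (Suc n) (a#s) = h 0 a # resp (\<lambda>j. h (Suc j)) n s"
  unfolding resp_def map_upt_Suc by simp

lemma derand:
  assumes "d > 0"
    and "\<forall>j<n. \<forall>a<c. \<forall>b<d. 0 \<le> p j a b"
    and "\<forall>j<n. \<forall>a<c. (\<Sum>b<d. p j a b) = (1::real)"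
  shows "\<exists>h. (\<forall>j<n. \<forall>a<c. h j a < d) \<and>
    (\<Sum>s\<in>tuples n c. \<Sum>m\<in>tuples n d. V s m * (\<Prod>j<n. p j (s!j) (m!j)))
      \<le> (\<Sum>s\<in>tuples n c. V s (resp h n s))"
  using assms(2,3)
proof (induction n arbitrary: V p)
  case 0
  then show ?case by (auto simp: tuples_0 resp_def)
next
  case (Suc n)
  define p' where "p' = (\<lambda>j. p (Suc j))"
  define V' where "V' = (\<lambda>s m. \<Sum>a<c. \<Sum>b<d. p 0 a b * V (a#s) (b#m))"
  have Qeq: "(\<Sum>s\<in>tuples (Suc n) c. \<Sum>m\<in>tuples (Suc n) d. V s m * (\<Prod>j<Suc n. p j (s!j) (m!j)))
     = (\<Sum>s\<in>tuples n c. \<Sum>m\<in>tuples n d. V' s m * (\<Prod>j<n. p' j (s!j) (m!j)))"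
  proof -
    have "(\<Sum>s\<in>tuples (Suc n) c. \<Sum>m\<in>tuples (Suc n) d. V s m * (\<Prod>j<Suc n. p j (s!j) (m!j)))
       = (\<Sum>a<c. \<Sum>s\<in>tuples n c. \<Sum>b<d. \<Sum>m\<in>tuples n d. p 0 a b * V (a#s) (b#m) * (\<Prod>j<n. p' j (s!j) (m!j)))"
      by (simp del: prod.lessThan_Suc add: sum_tuples_Suc prod.lessThan_Suc_shift p'_def mult_ac)
    also have "\<dots> = (\<Sum>s\<in>tuples n c. \<Sum>a<c. \<Sum>b<d. \<Sum>m\<in>tuples n d. p 0 a b * V (a#s) (b#m) * (\<Prod>j<n. p' j (s!j) (m!j)))"
      by (rule sum.swap)
    also have "\<dots> = (\<Sum>s\<in>tuples n c. \<Sum>a<c. \<Sum>m\<in>tuples n d. \<Sum>b<d. p 0 a b * V (a#s) (b#m) * (\<Prod>j<n. p' j (s!j) (m!j)))"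
      by (intro sum.cong refl sum.swap)
    also have "\<dots> = (\<Sum>s\<in>tuples n c. \<Sum>m\<in>tuples n d. \<Sum>a<c. \<Sum>b<d. p 0 a b * V (a#s) (b#m) * (\<Prod>j<n. p' j (s!j) (m!j)))"
      by (intro sum.cong refl sum.swap)
    also have "\<dots> = (\<Sum>s\<in>tuples n c. \<Sum>m\<in>tuples n d. V' s m * (\<Prod>j<n. p' j (s!j) (m!j)))"
      by (simp add: V'_def sum_distrib_right)
    finally show ?thesis .
  qed
  have p'1: "\<forall>j<n. \<forall>a<c. \<forall>b<d. 0 \<le> p' j a b" and p'2: "\<forall>j<n. \<forall>a<c. (\<Sum>b<d. p' j a b) = 1"
    using Suc.prems by (auto simp: p'_def)
  obtain h' where h'd: "\<forall>j<n. \<forall>a<c. h' j a < d" and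
    h'le: "(\<Sum>s\<in>tuples n c. \<Sum>m\<in>tuples n d. V' s m * (\<Prod>j<n. p' j (s!j) (m!j)))
      \<le> (\<Sum>s\<in>tuples n c. V' s (resp h' n s))"
    using Suc.IH[OF p'1 p'2] by blast
  define B where "B = (\<lambda>a b. \<Sum>s\<in>tuples n c. V (a#s) (b # resp h' n s))"
  have "\<forall>a. \<exists>b. a < c \<longrightarrow> b < d \<and> (\<forall>b'<d. B a b' \<le> B a b)"
  proof
    fix a
    obtain b where "b \<in> {..<d}" "\<forall>b'\<in>{..<d}. B a b' \<le> B a b"
      using ex_max[of "{..<d}" "B a"] assms(1) by auto
    then show "\<exists>b. a < c \<longrightarrow> b < d \<and> (\<forall>b'<d. B a b' \<le> B a b)" by auto
  qed
  then obtain bs where bs: "\<And>a. a < c \<Longrightarrow> bs a < d \<and> (\<forall>b'<d. B a b' \<le> B a (bs a))"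
    by metis
  define h where "h = (\<lambda>j a. case j of 0 \<Rightarrow> bs a | Suc j' \<Rightarrow> h' j' a)"
  have hd: "\<forall>j<Suc n. \<forall>a<c. h j a < d"
    using h'd bs by (auto simp: h_def split: nat.split)
  have "(\<Sum>s\<in>tuples n c. V' s (resp h' n s)) = (\<Sum>s\<in>tuples n c. \<Sum>a<c. \<Sum>b<d. p 0 a b * V (a#s) (b # resp h' n s))"
    by (simp add: V'_def)
  also have "\<dots> = (\<Sum>a<c. \<Sum>s\<in>tuples n c. \<Sum>b<d. p 0 a b * V (a#s) (b # resp h' n s))"
    by (rule sum.swap)
  also have "\<dots> = (\<Sum>a<c. \<Sum>b<d. \<Sum>s\<in>tuples n c. p 0 a b * V (a#s) (b # resp h' n s))"
    by (intro sum.cong refl sum.swap)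
  also have "\<dots> = (\<Sum>a<c. \<Sum>b<d. p 0 a b * B a b)"
    by (simp add: B_def sum_distrib_left)
  also have "\<dots> \<le> (\<Sum>a<c. \<Sum>b<d. p 0 a b * B a (bs a))"
    using bs Suc.prems(1) by (intro sum_mono mult_left_mono) auto
  also have "\<dots> = (\<Sum>a<c. B a (bs a))"
    using Suc.prems(2) by (simp add: sum_distrib_right[symmetric])
  also have "\<dots> = (\<Sum>s\<in>tuples (Suc n) c. V s (resp h (Suc n) s))"
    by (simp add: sum_tuples_Suc resp_Suc B_def h_def)
  finally show ?case using Qeq h'le hd by (intro exI[of _ h]) auto
qed


lemma inner_eq:
  assumes "x < d" "(\<Sum>k<d. q k) = (1::real)"
  shows "(\<Sum>k\<in>{1..d-1}. (kdelta k x - kdelta 0 x) * q k) = q x - kdelta 0 x"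
proof -
  have d: "d \<ge> 1" using assms(1) by simp
  have U: "{..<d} = insert 0 {1..d-1}" using d by auto
  have S: "(\<Sum>k\<in>{1..d-1}. q k) = 1 - q 0"
    using assms(2) unfolding U by simp
  show ?thesis
  proof (cases "x = 0")
    case True
    then have "(\<Sum>k\<in>{1..d-1}. (kdelta k x - kdelta 0 x) * q k) = - (\<Sum>k\<in>{1..d-1}. q k)"
      by (simp add: kdelta_def sum_negf)
    then show ?thesis using S True by (simp add: kdelta_def)
  next
    case False
    then have "(\<Sum>k\<in>{1..d-1}. (kdelta k x - kdelta 0 x) * q k) = (\<Sum>k\<in>{1..d-1}. if k = x then q k else 0)"
      by (intro sum.cong refl) (simp add: kdelta_def)
    also have "\<dots> = q x" using False assms(1) by simp
    finally show ?thesis using False by (simp add: kdelta_def)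
  qed
qed

lemma lhs_eq:
  assumes "\<forall>s\<in>tuples n c. (\<Sum>k<d. q s k) = 1" "\<forall>s\<in>tuples n c. f s < d"
  shows "bell_lhs n c d \<pi> f q = (\<Sum>s\<in>tuples n c. \<pi> s * q s (f s)) - (\<Sum>s\<in>tuples n c. \<pi> s * kdelta 0 (f s))"
proof -
  have "bell_lhs n c d \<pi> f q = (\<Sum>s\<in>tuples n c. \<pi> s * (q s (f s) - kdelta 0 (f s)))"
    unfolding bell_lhs_def
  proof (intro sum.cong refl)
    fix s assume "s \<in> tuples n c"
    then show "\<pi> s * (\<Sum>k\<in>{1..d-1}. (kdelta k (f s) - kdelta 0 (f s)) * q s k) = \<pi> s * (q s (f s) - kdelta 0 (f s))"
      using assms inner_eq[of "f s" d "q s"] by simp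
  qed
  then show ?thesis by (simp add: right_diff_distrib sum_subtractf)
qed

lemma pset_finite:
  "finite {(\<Sum>s\<in>tuples n c. \<pi> s * kdelta (f s) (g s)) | g. npartite_linear n c d g}"
proof (rule finite_subset)
  show "{(\<Sum>s\<in>tuples n c. \<pi> s * kdelta (f s) (g s)) | g. npartite_linear n c d g}
     \<subseteq> (\<lambda>A. sum \<pi> A) ` Pow (tuples n c)"
  proof
    fix x assume "x \<in> {(\<Sum>s\<in>tuples n c. \<pi> s * kdelta (f s) (g s)) | g. npartite_linear n c d g}"
    then obtain g where x: "x = (\<Sum>s\<in>tuples n c. \<pi> s * kdelta (f s) (g s))" by auto
    have "x = sum \<pi> {s\<in>tuples n c. f s = g s}"
      unfolding x using finite_tuples by (simp add: sum.inter_filter kdelta_def if_distrib cong: if_cong)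
    then show "x \<in> (\<lambda>A. sum \<pi> A) ` Pow (tuples n c)" by auto
  qed
qed (simp add: finite_tuples)

lemma pset_ne:
  assumes "d > 0"
  shows "{(\<Sum>s\<in>tuples n c. \<pi> s * kdelta (f s) (g s)) | g. npartite_linear n c d g} \<noteq> {}"
proof -
  have "npartite_linear n c d (\<lambda>_. 0)"
    unfolding npartite_linear_def using assms by (intro exI[of _ "\<lambda>_ _. 0"]) auto
  then show ?thesis by blast
qed


lemma sum_list_resp: "sum_list (resp h n s) = (\<Sum>j<n. h j (s!j))"
  by (simp add: resp_def sum_set_upt_conv_sum_list_nat[symmetric] atLeast0LessThan)

lemma lin_le:
  assumes "\<forall>j<n. \<forall>a<c. h j a < d"
  shows "(\<Sum>s\<in>tuples n c. \<pi> s * (if sum_list (resp h n s) mod d = f s then 1 else 0)) \<le> pbar_lin n c d \<pi> f"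
proof -
  define g where "g = (\<lambda>s. sum_list (resp h n s) mod d)"
  have lin: "npartite_linear n c d g"
    unfolding npartite_linear_def g_def sum_list_resp using assms by (intro exI[of _ h]) auto
  have "(\<Sum>s\<in>tuples n c. \<pi> s * (if sum_list (resp h n s) mod d = f s then 1 else 0))
      = (\<Sum>s\<in>tuples n c. \<pi> s * kdelta (f s) (g s))"
    by (intro sum.cong refl) (auto simp: kdelta_def g_def)
  also have "\<dots> \<le> pbar_lin n c d \<pi> f"
    unfolding pbar_lin_def using lin by (intro Max_ge pset_finite) blast
  finally show ?thesis .
qed

lemma pbar_lt1:
  assumes "d > 0" "\<not> npartite_linear n c d f"
    and "\<forall>s\<in>tuples n c. \<pi> s > 0"
    and "(\<Sum>s\<in>tuples n c. \<pi> s) = 1"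
  shows "pbar_lin n c d \<pi> f < 1"
proof -
  have "pbar_lin n c d \<pi> f \<in> {(\<Sum>s\<in>tuples n c. \<pi> s * kdelta (f s) (g s)) | g. npartite_linear n c d g}"
    unfolding pbar_lin_def using pset_finite pset_ne[OF assms(1)] by (rule Max_in)
  then obtain g where g: "npartite_linear n c d g"
    and pb: "pbar_lin n c d \<pi> f = (\<Sum>s\<in>tuples n c. \<pi> s * kdelta (f s) (g s))" by auto
  obtain gs where gs: "\<forall>j<n. \<forall>a<c. gs j a < d" "\<forall>s\<in>tuples n c. g s = (\<Sum>j<n. gs j (s ! j)) mod d"
    using g unfolding npartite_linear_def by blast
  have "\<exists>s0\<in>tuples n c. f s0 \<noteq> g s0"
  proof (rule ccontr)
    assume "\<not> ?thesis"
    then have "npartite_linear n c d f" using gs unfolding npartite_linear_def by auto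
    with assms(2) show False by simp
  qed
  then obtain s0 where s0: "s0 \<in> tuples n c" "f s0 \<noteq> g s0" by blast
  have "(\<Sum>s\<in>tuples n c. \<pi> s * kdelta (f s) (g s)) < (\<Sum>s\<in>tuples n c. \<pi> s)"
  proof (rule sum_strict_mono_ex1)
    show "\<forall>x\<in>tuples n c. \<pi> x * kdelta (f x) (g x) \<le> \<pi> x"
      using assms(3) by (auto simp: kdelta_def less_imp_le)
    show "\<exists>a\<in>tuples n c. \<pi> a * kdelta (f a) (g a) < \<pi> a"
      using s0 assms(3) by (auto simp: kdelta_def)
  qed (simp add: finite_tuples)
  then show ?thesis using pb assms(4) by simp
qed


lemma delta_sum:
  fixes a d :: nat
  assumes "a < d" shows "(\<Sum>k<d. (if a = k then 1 else 0) * (X::real)) = X"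
proof -
  have "(\<Sum>k<d. (if a = k then 1 else 0) * X) = (\<Sum>k<d. if a = k then X else 0)"
    by (intro sum.cong) auto
  then show ?thesis using assms sum.delta'[of "{..<d}" a "\<lambda>_. X"] by simp
qed

lemma lhv_part:
  assumes lhv: "lhv_model M P n c d" and d: "d > 0" and fd: "\<forall>s\<in>tuples n c. f s < d"
  shows "bell_lhs n c d \<pi> f (correlator n d (lhv_dist M P n)) \<le> bell_rhs n c d \<pi> f"
proof -
  interpret prob_space M using lhv by (simp add: lhv_model_def)
  have meas: "\<And>j a b. P j a b \<in> borel_measurable M" using lhv by (simp add: lhv_model_def)
  have nn: "\<And>j a b lam. j < n \<Longrightarrow> a < c \<Longrightarrow> b < d \<Longrightarrow> lam \<in> space M \<Longrightarrow> 0 \<le> P j a b lam"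
    using lhv by (simp add: lhv_model_def)
  have s1: "\<And>j a lam. j < n \<Longrightarrow> a < c \<Longrightarrow> lam \<in> space M \<Longrightarrow> (\<Sum>b<d. P j a b lam) = 1"
    using lhv by (simp add: lhv_model_def)
  have le1: "P j a b lam \<le> 1" if "j < n" "a < c" "b < d" "lam \<in> space M" for j a b lam
  proof -
    have "P j a b lam \<le> (\<Sum>b<d. P j a b lam)"
      using that nn by (intro member_le_sum) auto
    then show ?thesis using s1 that by simp
  qed
  define Pr where "Pr = (\<lambda>s m lam. \<Prod>j<n. P j (s!j) (m!j) lam)"
  have Prm: "Pr s m \<in> borel_measurable M" for s m
    unfolding Pr_def by (intro borel_measurable_prod meas)
  have int: "integrable M (Pr s m)" if "s \<in> tuples n c" "m \<in> tuples n d" for s m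
  proof (rule integrable_const_bound[where B=1])
    show "AE x in M. norm (Pr s m x) \<le> 1"
    proof (rule AE_I2)
      fix x assume x: "x \<in> space M"
      have b: "\<And>j. j < n \<Longrightarrow> s!j < c \<and> m!j < d" using that by (auto simp: tuples_def)
      have "0 \<le> Pr s m x" unfolding Pr_def using b x nn by (intro prod_nonneg) auto
      moreover have "Pr s m x \<le> 1" unfolding Pr_def using b x nn le1 by (intro prod_le_1) auto
      ultimately show "norm (Pr s m x) \<le> 1" by simp
    qed
  qed (rule Prm)
  define q where "q = correlator n d (lhv_dist M P n)"
  have q_def': "q s k = (\<Sum>m\<in>tuples n d. (if sum_list m mod d = k then 1 else 0) * integral\<^sup>L M (Pr s m))" for s k
    by (simp add: q_def correlator_def lhv_dist_def Pr_def)
  have sum1: "\<forall>s\<in>tuples n c. (\<Sum>k<d. q s k) = 1"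
  proof
    fix s assume s: "s \<in> tuples n c"
    have "(\<Sum>k<d. q s k) = (\<Sum>m\<in>tuples n d. \<Sum>k<d. (if sum_list m mod d = k then 1 else 0) * integral\<^sup>L M (Pr s m))"
      unfolding q_def' by (rule sum.swap)
    also have "\<dots> = (\<Sum>m\<in>tuples n d. integral\<^sup>L M (Pr s m))"
      using d by (intro sum.cong refl delta_sum) auto
    also have "\<dots> = integral\<^sup>L M (\<lambda>lam. \<Sum>m\<in>tuples n d. Pr s m lam)"
      using Bochner_Integration.integral_sum[where I="tuples n d" and f="Pr s"] int s by auto
    also have "\<dots> = integral\<^sup>L M (\<lambda>lam. 1)"
    proof (rule Bochner_Integration.integral_cong[OF refl])
      fix lam assume lam: "lam \<in> space M"
      have b: "\<And>j. j < n \<Longrightarrow> s!j < c" using s by (auto simp: tuples_def)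
      have "(\<Sum>m\<in>tuples n d. Pr s m lam) = (\<Prod>j<n. \<Sum>b<d. P j (s!j) b lam)"
        unfolding Pr_def by (rule sum_prod_tuples)
      also have "\<dots> = 1" using b lam s1 by (intro prod.neutral) auto
      finally show "(\<Sum>m\<in>tuples n d. Pr s m lam) = 1" .
    qed
    also have "\<dots> = 1" by (simp add: prob_space)
    finally show "(\<Sum>k<d. q s k) = 1" .
  qed
  define V where "V = (\<lambda>s m. \<pi> s * (if sum_list m mod d = f s then 1 else (0::real)))"
  have "(\<Sum>s\<in>tuples n c. \<pi> s * q s (f s))
      = (\<Sum>s\<in>tuples n c. \<Sum>m\<in>tuples n d. V s m * integral\<^sup>L M (Pr s m))"
    unfolding q_def' V_def by (simp add: sum_distrib_left mult_ac)
  also have "\<dots> = integral\<^sup>L M (\<lambda>lam. \<Sum>s\<in>tuples n c. \<Sum>m\<in>tuples n d. V s m * Pr s m lam)"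
    using int by (simp add: Bochner_Integration.integral_sum Bochner_Integration.integrable_sum)
  also have "\<dots> \<le> integral\<^sup>L M (\<lambda>lam. pbar_lin n c d \<pi> f)"
  proof (rule Bochner_Integration.integral_mono)
    show "integrable M (\<lambda>lam. \<Sum>s\<in>tuples n c. \<Sum>m\<in>tuples n d. V s m * Pr s m lam)"
      using int by (intro Bochner_Integration.integrable_sum Bochner_Integration.integrable_mult_right) auto
  next
    fix lam assume lam: "lam \<in> space M"
    have "\<exists>h. (\<forall>j<n. \<forall>a<c. h j a < d) \<and>
      (\<Sum>s\<in>tuples n c. \<Sum>m\<in>tuples n d. V s m * (\<Prod>j<n. P j (s!j) (m!j) lam))
        \<le> (\<Sum>s\<in>tuples n c. V s (resp h n s))"
      using lam nn s1 by (intro derand[OF d]) auto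
    then obtain h where h: "\<forall>j<n. \<forall>a<c. h j a < d"
      and le: "(\<Sum>s\<in>tuples n c. \<Sum>m\<in>tuples n d. V s m * Pr s m lam) \<le> (\<Sum>s\<in>tuples n c. V s (resp h n s))"
      unfolding Pr_def by blast
    show "(\<Sum>s\<in>tuples n c. \<Sum>m\<in>tuples n d. V s m * Pr s m lam) \<le> pbar_lin n c d \<pi> f"
      using le lin_le[OF h, of \<pi> f] unfolding V_def by simp
  qed simp
  also have "\<dots> = pbar_lin n c d \<pi> f" by (simp add: prob_space)
  finally have "(\<Sum>s\<in>tuples n c. \<pi> s * q s (f s)) \<le> pbar_lin n c d \<pi> f" .
  then show ?thesis
    unfolding q_def[symmetric] lhs_eq[OF sum1 fd] bell_rhs_def by simp
qed


theorem proposition3p3p1: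
  fixes n c d :: nat and f :: "nat list \<Rightarrow> nat" and \<pi> :: "nat list \<Rightarrow> real"
  assumes "n \<ge> 1" and "c \<ge> 2" and "d \<ge> 2"
    and "\<forall>s\<in>tuples n c. f s < d"
    and "\<not> npartite_linear n c d f"
    and "\<forall>s\<in>tuples n c. \<pi> s > 0"
    and "(\<Sum>s\<in>tuples n c. \<pi> s) = 1"
  shows "(\<forall>(M :: 'h measure) P. lhv_model M P n c d \<longrightarrow>
            bell_lhs n c d \<pi> f (correlator n d (lhv_dist M P n)) \<le> bell_rhs n c d \<pi> f)
       \<and> bell_rhs n c d \<pi> f < (SUP q\<in>corr_families n c d. bell_lhs n c d \<pi> f q)"
proof
  have d: "d > 0" using assms(3) by simp
  show "\<forall>(M :: 'h measure) P. lhv_model M P n c d \<longrightarrow>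
            bell_lhs n c d \<pi> f (correlator n d (lhv_dist M P n)) \<le> bell_rhs n c d \<pi> f"
    using lhv_part[OF _ d assms(4)] by blast
  define X where "X = (\<Sum>s\<in>tuples n c. \<pi> s * kdelta 0 (f s))"
  define q0 where "q0 = (\<lambda>s k. kdelta k (f s))"
  have q0sum: "\<forall>s\<in>tuples n c. (\<Sum>k<d. q0 s k) = 1"
  proof
    fix s assume "s \<in> tuples n c"
    then have "f s < d" using assms(4) by simp
    then show "(\<Sum>k<d. q0 s k) = 1"
      unfolding q0_def kdelta_def using sum.delta[of "{..<d}" "f s" "\<lambda>_. 1::real"] by simp
  qed
  have q0in: "q0 \<in> corr_families n c d"
    using q0sum unfolding corr_families_def by (auto simp: q0_def kdelta_def)
  have lq0: "bell_lhs n c d \<pi> f q0 = 1 - X"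
    unfolding lhs_eq[OF q0sum assms(4)] X_def using assms(7) by (simp add: q0_def kdelta_def)
  have bdd: "bdd_above ((bell_lhs n c d \<pi> f) ` corr_families n c d)"
  proof (rule bdd_aboveI2)
    fix q assume q: "q \<in> corr_families n c d"
    then have qs: "\<forall>s\<in>tuples n c. (\<Sum>k<d. q s k) = 1" and qn: "\<forall>s\<in>tuples n c. \<forall>k<d. 0 \<le> q s k"
      unfolding corr_families_def by auto
    have "(\<Sum>s\<in>tuples n c. \<pi> s * q s (f s)) \<le> (\<Sum>s\<in>tuples n c. \<pi> s * 1)"
    proof (rule sum_mono)
      fix s assume s: "s \<in> tuples n c"
      have "q s (f s) \<le> (\<Sum>k<d. q s k)"
        using s qn assms(4) by (intro member_le_sum) auto
      then have "q s (f s) \<le> 1" using qs s by simp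
      then show "\<pi> s * q s (f s) \<le> \<pi> s * 1"
        using assms(6) s by (intro mult_left_mono) (auto simp: less_imp_le)
    qed
    then show "bell_lhs n c d \<pi> f q \<le> 1 - X"
      unfolding lhs_eq[OF qs assms(4)] X_def using assms(7) by simp
  qed
  have "bell_rhs n c d \<pi> f < 1 - X"
    unfolding bell_rhs_def X_def using pbar_lt1[OF d assms(5,6,7)] by simp
  also have "\<dots> \<le> (SUP q\<in>corr_families n c d. bell_lhs n c d \<pi> f q)"
    using cSUP_upper[OF q0in bdd] lq0 by simp
  finally show "bell_rhs n c d \<pi> f < (SUP q\<in>corr_families n c d. bell_lhs n c d \<pi> f q)" .
qed

end
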